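(* Assume the setting below and suppose $\tau\le0$ and $|x_k^{(1)}|<a$. Let $q_k=\left\lceil\log_2\frac{(1+\tau)a}{|x_k^{(1)}|}\right\rceil$ (an integer which may be zero or negative). Then (with probability one) the step returned by the line search at iteration $k$ is $t_k=\min(1,1/2^{q_k-1})$.
   Context: Let $n\ge2$, $a\ge\sqrt{n-1}$, $f(x)=a|x^{(1)}|+\sum_{i=2}^n x^{(i)}$ on $\mathbb{R}^n$ ($x^{(i)}$ the $i$-th coordinate), $0<c_1<c_2<1$, and $\tau=c_1+\frac{(n-1)(c_1-1)}{a^2}$. The initial point $x_0$ is drawn from the normal distribution on $\mathbb{R}^n$ (independently of $a$), and $x_{k+1}=x_k+t_kd_k$, $d_k=-\nabla f(x_k)$, where $t_k$ is returned by the following Armijo–Wolfe bracketing line search: set $\alpha=0$, $\beta=+\infty$, $t=1$; repeat: if $A(t)$ fails set $\beta\leftarrow t$; else if $W(t)$ fails set $\alpha\leftarrow t$; else stop and return $t$; then if $\beta<+\infty$ set $t\leftarrow(\alpha+\beta)/2$, otherwise $t\leftarrow2\alpha$. Here $A(t)$: $f(x_k+td_k)\le f(x_k)+c_1t\nabla f(x_k)^Td_k$, and $W(t)$: $f$ is differentiable at $x_k+td_k$ and $\nabla f(x_k+td_k)^Td_k\ge c_2\nabla f(x_k)^Td_k$. All statements are understood to hold with probability one. *)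

theory Defs
  imports "HOL-Analysis.Analysis" "HOL-Probability.Probability"
begin

text \<open>The test function f(x) = a |x^(1)| + sum over the other coordinates, on real^'n;
  the distinguished index i1 plays the role of the first coordinate.\<close>
definition fnc :: "'n::finite \<Rightarrow> real \<Rightarrow> real^'n \<Rightarrow> real" where
  "fnc i1 a x = a * \<bar>x $ i1\<bar> + (\<Sum>i\<in>UNIV - {i1}. x $ i)"

definition grad :: "(real^'n \<Rightarrow> real) \<Rightarrow> real^'n \<Rightarrow> real^'n" where
  "grad f x = (\<chi> i. frechet_derivative f (at x) (axis i 1))"

definition armijo :: "(real^'n \<Rightarrow> real) \<Rightarrow> real \<Rightarrow> real^'n \<Rightarrow> real^'n \<Rightarrow> real \<Rightarrow> bool" where
  "armijo f c1 x d t \<longleftrightarrow> f (x + t *\<^sub>R d) \<le> f x + c1 * t * (grad f x \<bullet> d)"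

definition wolfe :: "(real^'n \<Rightarrow> real) \<Rightarrow> real \<Rightarrow> real^'n \<Rightarrow> real^'n \<Rightarrow> real \<Rightarrow> bool" where
  "wolfe f c2 x d t \<longleftrightarrow> f differentiable (at (x + t *\<^sub>R d)) \<and>
      grad f (x + t *\<^sub>R d) \<bullet> d \<ge> c2 * (grad f x \<bullet> d)"

text \<open>States (alpha, beta, t) of the bracketing line search; beta = None encodes +infinity.
  State j is the j-th trial step; the search stops at the first j whose trial t satisfies A and W.\<close>
fun ls_state :: "(real^'n \<Rightarrow> real) \<Rightarrow> real \<Rightarrow> real \<Rightarrow> real^'n \<Rightarrow> real^'n \<Rightarrow> nat
     \<Rightarrow> real \<times> real option \<times> real" where
  "ls_state f c1 c2 x d 0 = (0, None, 1)"
| "ls_state f c1 c2 x d (Suc j) =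
     (case ls_state f c1 c2 x d j of (\<alpha>, \<beta>, t) \<Rightarrow>
        (let (\<alpha>', \<beta>') = (if \<not> armijo f c1 x d t then (\<alpha>, Some t)
                          else if \<not> wolfe f c2 x d t then (t, \<beta>)
                          else (\<alpha>, \<beta>))
         in (\<alpha>', \<beta>', (case \<beta>' of Some b \<Rightarrow> (\<alpha>' + b) / 2 | None \<Rightarrow> 2 * \<alpha>'))))"

definition ls_trial :: "(real^'n \<Rightarrow> real) \<Rightarrow> real \<Rightarrow> real \<Rightarrow> real^'n \<Rightarrow> real^'n \<Rightarrow> nat \<Rightarrow> real" where
  "ls_trial f c1 c2 x d j = snd (snd (ls_state f c1 c2 x d j))"

definition ls_stops_at :: "(real^'n \<Rightarrow> real) \<Rightarrow> real \<Rightarrow> real \<Rightarrow> real^'n \<Rightarrow> real^'n \<Rightarrow> nat \<Rightarrow> bool" where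
  "ls_stops_at f c1 c2 x d j \<longleftrightarrow>
     armijo f c1 x d (ls_trial f c1 c2 x d j) \<and> wolfe f c2 x d (ls_trial f c1 c2 x d j)"

definition ls_terminates :: "(real^'n \<Rightarrow> real) \<Rightarrow> real \<Rightarrow> real \<Rightarrow> real^'n \<Rightarrow> real^'n \<Rightarrow> bool" where
  "ls_terminates f c1 c2 x d \<longleftrightarrow> (\<exists>j. ls_stops_at f c1 c2 x d j)"

text \<open>Returned step (meaningful only when the search terminates).\<close>
definition ls_step :: "(real^'n \<Rightarrow> real) \<Rightarrow> real \<Rightarrow> real \<Rightarrow> real^'n \<Rightarrow> real^'n \<Rightarrow> real" where
  "ls_step f c1 c2 x d = ls_trial f c1 c2 x d (LEAST j. ls_stops_at f c1 c2 x d j)"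

fun gd_iter :: "(real^'n \<Rightarrow> real) \<Rightarrow> real \<Rightarrow> real \<Rightarrow> real^'n \<Rightarrow> nat \<Rightarrow> real^'n" where
  "gd_iter f c1 c2 x0 0 = x0"
| "gd_iter f c1 c2 x0 (Suc k) =
     (let x = gd_iter f c1 c2 x0 k; d = - grad f x in x + ls_step f c1 c2 x d *\<^sub>R d)"

definition gd_step :: "(real^'n \<Rightarrow> real) \<Rightarrow> real \<Rightarrow> real \<Rightarrow> real^'n \<Rightarrow> nat \<Rightarrow> real" where
  "gd_step f c1 c2 x0 k =
     (let x = gd_iter f c1 c2 x0 k in ls_step f c1 c2 x (- grad f x))"

definition std_normal_vec :: "(real^'n) measure" where
  "std_normal_vec = density lborel (\<lambda>x. ennreal (\<Prod>i\<in>UNIV. std_normal_density (x $ i)))"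

end

theory Submission
  imports Defs
begin

lemma grad_fnc:
  fixes x :: "real^'n" and i1 :: 'n
  assumes "x $ i1 \<noteq> 0"
  shows "grad (fnc i1 a) x = (\<chi> i. if i = i1 then a * sgn (x $ i1) else 1)"
    and "fnc i1 a differentiable (at x)"
proof -
  define s where "s = sgn (x $ i1)"
  define g where "g = (\<lambda>y::real^'n. a * s * y $ i1 + (\<Sum>i\<in>UNIV - {i1}. y $ i))"
  have lin: "bounded_linear g"
    unfolding g_def
    by (intro bounded_linear_add bounded_linear_const_mult bounded_linear_sum bounded_linear_vec_nth)
  have d0: "(g has_derivative g) (at x)" using lin by (rule bounded_linear_imp_has_derivative)
  have op: "open {y::real^'n. 0 < s * y $ i1}"
    by (intro open_Collect_less continuous_intros)
  have xin: "x \<in> {y::real^'n. 0 < s * y $ i1}"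
    using assms by (auto simp: s_def sgn_real_def)
  have eq: "g y = fnc i1 a y" if "y \<in> {y::real^'n. 0 < s * y $ i1}" for y
  proof -
    have "\<bar>y $ i1\<bar> = s * y $ i1" using that assms
      by (auto simp: s_def sgn_real_def split: if_splits)
    then show ?thesis by (simp add: g_def fnc_def)
  qed
  have D: "(fnc i1 a has_derivative g) (at x)"
    by (rule has_derivative_transform_within_open[OF d0 op xin eq])
  then show "fnc i1 a differentiable (at x)" unfolding differentiable_def by blast
  have fd: "frechet_derivative (fnc i1 a) (at x) = g"
    using frechet_derivative_at[OF D] by simp
  have "g (axis j 1) = (if j = i1 then a * sgn (x $ i1) else 1)" for j
  proof -
    have "(\<Sum>i\<in>UNIV - {i1}. axis j (1::real) $ i) = (if j = i1 then 0 else 1)"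
      by (auto simp: axis_def if_distrib sum.delta cong: if_cong)
    then show ?thesis by (auto simp: g_def axis_def s_def)
  qed
  then show "grad (fnc i1 a) x = (\<chi> i. if i = i1 then a * sgn (x $ i1) else 1)"
    by (simp add: grad_def fd)
qed

lemma inner_two:
  fixes i1 :: "'n::finite"
  shows "(\<chi> i. if i = i1 then p else q) \<bullet> (\<chi> i. if i = i1 then r else s) =
     p * r + (real CARD('n) - 1) * (q * s)"
proof -
  have "(\<chi> i. if i = i1 then p else q) \<bullet> (\<chi> i. if i = i1 then r else s) =
     (\<Sum>i\<in>UNIV. (if i = i1 then p * r else q * s))"
    unfolding inner_vec_def by (intro sum.cong) auto
  also have "\<dots> = p * r + (\<Sum>i\<in>UNIV - {i1}. q * s)"
    by (subst sum.remove[of _ i1]) (auto intro!: sum.cong)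
  also have "\<dots> = p * r + (real CARD('n) - 1) * (q * s)"
    by (simp add: card_Diff_singleton of_nat_diff)
  finally show ?thesis .
qed

lemma ls_facts:
  fixes x :: "real^'n" and i1 :: 'n and a c1 c2 t :: real
  assumes x1: "x $ i1 \<noteq> 0" and a1: "a > 0" and an: "a\<^sup>2 \<ge> real CARD('n) - 1"
    and c: "0 < c1" "c1 < c2" "c2 < 1" and t0: "t > 0"
  defines "u \<equiv> \<bar>x $ i1\<bar>" and "n \<equiv> real CARD('n)"
  shows "armijo (fnc i1 a) c1 x (- grad (fnc i1 a) x) t \<longleftrightarrow>
           a * \<bar>u - t * a\<bar> - t * (n - 1) \<le> a * u - c1 * t * (a\<^sup>2 + (n - 1))"
    and "u < t * a \<Longrightarrow> wolfe (fnc i1 a) c2 x (- grad (fnc i1 a) x) t"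
proof -
  define s where "s = sgn (x $ i1)"
  have s2: "s * s = 1" using x1 by (auto simp: s_def sgn_real_def)
  have xs: "x $ i1 = s * u" using x1 by (auto simp: s_def u_def sgn_real_def)
  have G: "grad (fnc i1 a) x = (\<chi> i. if i = i1 then a * s else 1)"
    unfolding s_def by (rule grad_fnc(1)[OF x1])
  have D: "- grad (fnc i1 a) x = (\<chi> i. if i = i1 then - (a * s) else - 1)"
    by (simp add: G vec_eq_iff)
  have GD: "grad (fnc i1 a) x \<bullet> (- grad (fnc i1 a) x) = - (a\<^sup>2 + (n - 1))"
    unfolding D unfolding G inner_two n_def
    using s2 by (simp add: power2_eq_square algebra_simps)
  have y1: "(x + t *\<^sub>R (- grad (fnc i1 a) x)) $ i1 = s * (u - t * a)"
    by (simp add: D xs algebra_simps)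
  have ys: "(\<Sum>i\<in>UNIV - {i1}. (x + t *\<^sub>R (- grad (fnc i1 a) x)) $ i)
       = (\<Sum>i\<in>UNIV - {i1}. x $ i) - t * (n - 1)"
  proof -
    have "(\<Sum>i\<in>UNIV - {i1}. (x + t *\<^sub>R (- grad (fnc i1 a) x)) $ i)
        = (\<Sum>i\<in>UNIV - {i1}. x $ i - t)"
      by (intro sum.cong) (auto simp: D)
    also have "\<dots> = (\<Sum>i\<in>UNIV - {i1}. x $ i) - t * (n - 1)"
      by (simp add: sum_subtractf card_Diff_singleton n_def of_nat_diff algebra_simps)
    finally show ?thesis .
  qed
  have absy: "\<bar>s * (u - t * a)\<bar> = \<bar>u - t * a\<bar>"
    using s2 by (auto simp: abs_mult s_def sgn_real_def split: if_splits)
  have F1: "fnc i1 a (x + t *\<^sub>R (- grad (fnc i1 a) x)) = a * \<bar>u - t * a\<bar> + (\<Sum>i\<in>UNIV - {i1}. x $ i) - t * (n - 1)"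
    unfolding fnc_def y1 ys absy by simp
  have F0: "fnc i1 a x = a * u + (\<Sum>i\<in>UNIV - {i1}. x $ i)"
    by (simp add: fnc_def u_def)
  show "armijo (fnc i1 a) c1 x (- grad (fnc i1 a) x) t \<longleftrightarrow>
           a * \<bar>u - t * a\<bar> - t * (n - 1) \<le> a * u - c1 * t * (a\<^sup>2 + (n - 1))"
    unfolding armijo_def F1 F0 GD by (simp add: algebra_simps)
  assume ut: "u < t * a"
  have yne: "(x + t *\<^sub>R (- grad (fnc i1 a) x)) $ i1 \<noteq> 0"
    unfolding y1 using ut s2 by auto
  have sy: "sgn ((x + t *\<^sub>R (- grad (fnc i1 a) x)) $ i1) = - s"
    unfolding y1 using ut x1 by (auto simp: s_def sgn_real_def)
  have G2: "grad (fnc i1 a) (x + t *\<^sub>R (- grad (fnc i1 a) x)) = (\<chi> i. if i = i1 then - (a * s) else 1)"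
    unfolding grad_fnc(1)[OF yne] sy by (simp add: vec_eq_iff)
  have GD2: "grad (fnc i1 a) (x + t *\<^sub>R (- grad (fnc i1 a) x)) \<bullet> (- grad (fnc i1 a) x) = a\<^sup>2 - (n - 1)"
    unfolding G2 unfolding D inner_two n_def
    using s2 by (simp add: power2_eq_square algebra_simps)
  have n1: "n \<ge> 1" unfolding n_def
    using finite_UNIV_card_ge_0[where 'a='n] by simp
  have "c2 * (- (a\<^sup>2 + (n - 1))) \<le> 0"
    using c n1 zero_le_power2[of a] by (intro mult_nonneg_nonpos) linarith+
  moreover have "0 \<le> a\<^sup>2 - (n - 1)" using an by (simp add: n_def)
  ultimately show "wolfe (fnc i1 a) c2 x (- grad (fnc i1 a) x) t"
    unfolding wolfe_def GD2 GD using grad_fnc(2)[OF yne, of a] by linarith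
qed

lemma ls_main:
  fixes x :: "real^'n" and i1 :: 'n and a c1 c2 \<tau> :: real
  assumes x1: "x $ i1 \<noteq> 0" and ua: "\<bar>x $ i1\<bar> < a" and a1: "a > 0"
    and an: "a\<^sup>2 \<ge> real CARD('n) - 1"
    and c: "0 < c1" "c1 < c2" "c2 < 1"
    and tau: "\<tau> = c1 + (real CARD('n) - 1) * (c1 - 1) / a\<^sup>2" and tau0: "\<tau> \<le> 0"
  shows "ls_terminates (fnc i1 a) c1 c2 x (- grad (fnc i1 a) x) \<and>
     ls_step (fnc i1 a) c1 c2 x (- grad (fnc i1 a) x) =
       min 1 (1 / 2 powr (real_of_int \<lceil>log 2 ((1 + \<tau>) * a / \<bar>x $ i1\<bar>)\<rceil> - 1))"
proof -
  define u where "u = \<bar>x $ i1\<bar>"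
  define n where "n = real CARD('n)"
  define f where "f = fnc i1 a"
  define d where "d = - grad f x"
  have u0: "u > 0" using x1 by (simp add: u_def)
  have ua': "u < a" using ua by (simp add: u_def)
  have n1: "n \<ge> 1" unfolding n_def
    using finite_UNIV_card_ge_0[where 'a='n] by simp
  have an': "n - 1 \<le> a\<^sup>2" using an by (simp add: n_def)
  have a2: "a\<^sup>2 > 0" using a1 by simp
  have key: "(1 + \<tau>) * a\<^sup>2 = a\<^sup>2 + c1 * a\<^sup>2 + (n - 1) * (c1 - 1)"
    using a2 by (simp add: tau n_def field_simps)
  have "(n - 1) * (c1 - 1) \<ge> a\<^sup>2 * (c1 - 1)"
    using an' c by (intro mult_right_mono_neg) auto
  moreover have "a\<^sup>2 * (c1 - 1) = c1 * a\<^sup>2 - a\<^sup>2" by (simp add: algebra_simps)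
  moreover have "c1 * a\<^sup>2 > 0" using c a2 by simp
  ultimately have "(1 + \<tau>) * a\<^sup>2 > 0" using key by linarith
  then have tp: "1 + \<tau> > 0" using a2 by (simp add: zero_less_mult_iff)
  have t1: "1 + \<tau> \<le> 1" using tau0 by simp
  define K where "K = (1 + \<tau>) * a"
  have K0: "K > 0" using tp a1 by (simp add: K_def)
  have Ka: "K \<le> a" using t1 a1 by (simp add: K_def)
  define R where "R = 2 * u / K"
  have R0: "R > 0" using u0 K0 by (simp add: R_def)
  have LR: "u / a \<le> R / 2"
  proof -
    have "u / a \<le> u / K" using K0 Ka u0 by (intro divide_left_mono) auto
    then show ?thesis using R_def by simp
  qed
  have "u / a < R" using LR R0 by linarith
  have arm: "armijo f c1 x d t \<longleftrightarrow> t \<le> R" if "u < t * a" for t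
  proof -
    have t0: "t > 0" using that u0 a1 by (smt (verit) mult_nonpos_nonneg)
    have "armijo f c1 x d t \<longleftrightarrow> a * (t * a - u) - t * (n - 1) \<le> a * u - c1 * t * (a\<^sup>2 + (n - 1))"
      using ls_facts(1)[OF x1 a1 an c t0] that by (simp add: f_def d_def u_def n_def)
    also have "\<dots> \<longleftrightarrow> t * ((1 + \<tau>) * a\<^sup>2) \<le> 2 * a * u"
      unfolding key by (simp add: algebra_simps power2_eq_square)
    also have "\<dots> \<longleftrightarrow> a * (t * K) \<le> a * (2 * u)"
      by (simp add: K_def power2_eq_square algebra_simps)
    also have "\<dots> \<longleftrightarrow> t * K \<le> 2 * u" using a1 by simp
    also have "\<dots> \<longleftrightarrow> t \<le> R" using K0 by (simp add: R_def field_simps)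
    finally show ?thesis .
  qed
  have wol: "wolfe f c2 x d t" if "u < t * a" for t
  proof -
    have t0: "t > 0" using that u0 a1 by (smt (verit) mult_nonpos_nonneg)
    show ?thesis using ls_facts(2)[OF x1 a1 an c t0] that by (simp add: f_def d_def u_def)
  qed
  define y where "y = - log 2 R"
  define N where "N = nat \<lceil>y\<rceil>"
  have p2: "(2::real) powr (- real j) = 1 / 2 ^ j" for j
    by (simp add: powr_minus_divide powr_realpow)
  have bigR: "R < 1 / 2 ^ j" if "j < N" for j
  proof -
    have "int j < \<lceil>y\<rceil>" using that by (simp add: N_def)
    then have "real j < y" by (simp add: less_ceiling_iff)
    then have "log 2 R < - real j" by (simp add: y_def)
    then have "R < 2 powr (- real j)" using R0 by (simp add: log_less_iff)
    then show ?thesis by (simp add: p2)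
  qed
  have NR: "1 / 2 ^ N \<le> R"
  proof -
    have "y \<le> real N" unfolding N_def by linarith
    then have "- real N \<le> log 2 R" by (simp add: y_def)
    then have "2 powr (- real N) \<le> R" using R0 by (simp add: le_log_iff)
    then show ?thesis by (simp add: p2)
  qed
  have NL: "u < (1 / 2 ^ N) * a"
  proof (cases N)
    case 0
    then show ?thesis using ua' by simp
  next
    case (Suc m)
    have "R < 1 / 2 ^ m" using bigR[of m] Suc by simp
    then have "R / 2 < 1 / 2 ^ N" using Suc by simp
    then have "u / a < 1 / 2 ^ N" using LR by linarith
    then show ?thesis using a1 by (simp add: field_simps)
  qed
  have st: "\<exists>\<beta>. ls_state f c1 c2 x d j = (0, \<beta>, 1 / 2 ^ j)" if "j \<le> N" for j
    using that
  proof (induction j)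
    case 0
    then show ?case by simp
  next
    case (Suc j)
    then obtain \<beta> where b: "ls_state f c1 c2 x d j = (0, \<beta>, 1 / 2 ^ j)" by auto
    have jN: "j < N" using Suc by simp
    have "u / a < 1 / 2 ^ j" using bigR[OF jN] \<open>u / a < R\<close> by linarith
    then have "u < 1 / 2 ^ j * a" using a1 by (simp add: field_simps)
    then have "\<not> armijo f c1 x d (1 / 2 ^ j)" using arm bigR[OF jN] by simp
    then show ?case by (simp add: b)
  qed
  have trial: "ls_trial f c1 c2 x d j = 1 / 2 ^ j" if "j \<le> N" for j
    using st[OF that] by (auto simp: ls_trial_def)
  have notstop: "\<not> ls_stops_at f c1 c2 x d j" if "j < N" for j
  proof -
    have "u / a < 1 / 2 ^ j" using bigR[OF that] \<open>u / a < R\<close> by linarith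
    then have "u < 1 / 2 ^ j * a" using a1 by (simp add: field_simps)
    then show ?thesis using arm bigR[OF that] trial[of j] that
      by (simp add: ls_stops_at_def)
  qed
  have stopN: "ls_stops_at f c1 c2 x d N"
    using arm[OF NL] wol[OF NL] NR trial[of N] by (simp add: ls_stops_at_def)
  have least: "(LEAST j. ls_stops_at f c1 c2 x d j) = N"
    by (rule Least_equality[where P="\<lambda>j. ls_stops_at f c1 c2 x d j", OF stopN]) (meson notstop not_le)
  have step: "ls_step f c1 c2 x d = 1 / 2 ^ N"
    unfolding ls_step_def least using trial by simp
  have q: "\<lceil>log 2 ((1 + \<tau>) * a / \<bar>x $ i1\<bar>)\<rceil> - 1 = \<lceil>y\<rceil>"
  proof -
    have "(1 + \<tau>) * a / \<bar>x $ i1\<bar> = 2 / R" using u0 K0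
      by (simp add: R_def K_def u_def)
    then have "log 2 ((1 + \<tau>) * a / \<bar>x $ i1\<bar>) = y + 1"
      using R0 by (simp add: log_divide y_def)
    then show ?thesis by simp
  qed
  have qr: "real_of_int \<lceil>log 2 ((1 + \<tau>) * a / \<bar>x $ i1\<bar>)\<rceil> - 1 = real_of_int \<lceil>y\<rceil>"
    using q by (metis of_int_diff of_int_1)
  have fin0: "min 1 (1 / 2 powr (real_of_int \<lceil>y\<rceil>)) = 1 / 2 ^ N"
  proof (cases "\<lceil>y\<rceil> \<le> 0")
    case True
    then have "N = 0" by (simp add: N_def)
    have "(2::real) powr (real_of_int \<lceil>y\<rceil>) \<le> 2 powr 0"
      using True by (intro powr_mono) auto
    then have "(2::real) powr (real_of_int \<lceil>y\<rceil>) \<le> 1" by simp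
    then have "1 \<le> 1 / (2::real) powr (real_of_int \<lceil>y\<rceil>)"
      by (simp add: field_simps)
    then show ?thesis using \<open>N = 0\<close> by simp
  next
    case False
    then have "real_of_int \<lceil>y\<rceil> = real N" by (simp add: N_def)
    then have "(2::real) powr (real_of_int \<lceil>y\<rceil>) = 2 ^ N" by (simp add: powr_realpow)
    moreover have "1 / (2::real) ^ N \<le> 1" by simp
    ultimately show ?thesis by simp
  qed
  have fin: "min 1 (1 / 2 powr (real_of_int \<lceil>log 2 ((1 + \<tau>) * a / \<bar>x $ i1\<bar>)\<rceil> - 1)) = 1 / 2 ^ N"
    unfolding qr by (rule fin0)
  show ?thesis
    using stopN step fin unfolding ls_terminates_def f_def d_def by auto
qed

lemma ls_state_rat:
  "fst (ls_state f c1 c2 x d j) \<in> \<rat> \<and> snd (snd (ls_state f c1 c2 x d j)) \<in> \<rat> \<and>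
   (\<forall>b. fst (snd (ls_state f c1 c2 x d j)) = Some b \<longrightarrow> b \<in> \<rat>)"
proof (induction j)
  case 0
  then show ?case by simp
next
  case (Suc j)
  obtain \<alpha> \<beta> t where e: "ls_state f c1 c2 x d j = (\<alpha>, \<beta>, t)" by (cases "ls_state f c1 c2 x d j") auto
  have h: "\<alpha> \<in> \<rat>" "t \<in> \<rat>" "\<And>b. \<beta> = Some b \<Longrightarrow> b \<in> \<rat>" using Suc e by auto
  show ?case
    using h by (auto simp: e Let_def split: option.splits)
qed

lemma ls_step_rat: "ls_step f c1 c2 x d \<in> \<rat>"
  unfolding ls_step_def ls_trial_def using ls_state_rat by blast

lemma iter_rat:
  fixes x0 :: "real^'n" and i1 :: 'n and a :: real
  assumes G: "\<forall>r\<in>\<rat>. x0 $ i1 \<noteq> a * r"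
  shows "\<exists>r\<in>\<rat>. gd_iter (fnc i1 a) c1 c2 x0 k $ i1 = x0 $ i1 + a * r"
proof (induction k)
  case 0
  then show ?case by (intro bexI[of _ 0]) auto
next
  case (Suc k)
  then obtain r where r: "r \<in> \<rat>" "gd_iter (fnc i1 a) c1 c2 x0 k $ i1 = x0 $ i1 + a * r" by auto
  define xk where "xk = gd_iter (fnc i1 a) c1 c2 x0 k"
  define t where "t = ls_step (fnc i1 a) c1 c2 xk (- grad (fnc i1 a) xk)"
  have ne: "xk $ i1 \<noteq> 0"
  proof
    assume "xk $ i1 = 0"
    then have "x0 $ i1 = a * (- r)" using r by (simp add: xk_def)
    moreover have "- r \<in> \<rat>" using r by simp
    ultimately show False using G by blast
  qed
  have sq: "sgn (xk $ i1) \<in> \<rat>" by (simp add: sgn_real_def)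
  have tq: "t \<in> \<rat>" unfolding t_def by (rule ls_step_rat)
  have "gd_iter (fnc i1 a) c1 c2 x0 (Suc k) $ i1 = xk $ i1 - t * (a * sgn (xk $ i1))"
  proof -
    have "gd_iter (fnc i1 a) c1 c2 x0 (Suc k) = xk + t *\<^sub>R (- grad (fnc i1 a) xk)"
      by (simp add: xk_def t_def Let_def)
    moreover have "grad (fnc i1 a) xk $ i1 = a * sgn (xk $ i1)"
      unfolding grad_fnc(1)[OF ne] by simp
    ultimately show ?thesis by simp
  qed
  also have "\<dots> = x0 $ i1 + a * (r - t * sgn (xk $ i1))"
    using r by (simp add: xk_def algebra_simps)
  finally show ?case using r sq tq by (intro bexI[of _ "r - t * sgn (xk $ i1)"]) auto
qed

lemma AE_good:
  fixes i1 :: "'n::finite" and a :: real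
  shows "AE x0 in std_normal_vec. \<forall>r\<in>\<rat>. x0 $ i1 \<noteq> a * r"
proof -
  define N where "N = (\<Union>r\<in>\<rat>. {x::real^'n. axis i1 1 \<bullet> x = a * r})"
  have "negligible N" unfolding N_def
  proof (rule negligible_countable_Union)
    show "countable ((\<lambda>r. {x::real^'n. axis i1 1 \<bullet> x = a * r}) ` \<rat>)"
      using countable_rat by blast
  next
    fix S assume "S \<in> (\<lambda>r. {x::real^'n. axis i1 1 \<bullet> x = a * r}) ` \<rat>"
    then obtain r where "S = {x::real^'n. axis i1 1 \<bullet> x = a * r}" by auto
    moreover have "axis i1 (1::real) \<noteq> 0" by (simp add: vec_eq_iff axis_def)
    ultimately show "negligible S" using negligible_hyperplane by blast
  qed
  then have Nn: "N \<in> null_sets lebesgue" by (simp add: negligible_iff_null_sets)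
  have "AE x0 in lebesgue. \<forall>r\<in>\<rat>. x0 $ i1 \<noteq> a * r"
    by (rule AE_I'[OF Nn]) (auto simp: N_def inner_axis')
  then have L: "AE x0 in lborel. \<forall>r\<in>\<rat>. x0 $ i1 \<noteq> a * r"
    by (simp add: AE_completion_iff)
  have meas: "(\<lambda>x::real^'n. ennreal (\<Prod>i\<in>UNIV. std_normal_density (x $ i))) \<in> borel_measurable lborel"
    by measurable
  show ?thesis
    unfolding std_normal_vec_def using L by (simp add: AE_density[OF meas]) (auto elim: AE_mp)
qed

theorem theorem4:
  fixes a c1 c2 \<tau> :: real and i1 :: "'n::finite"
  assumes "CARD('n) \<ge> 2"
    and "a \<ge> sqrt (real CARD('n) - 1)"
    and "0 < c1" and "c1 < c2" and "c2 < 1"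
    and "\<tau> = c1 + (real CARD('n) - 1) * (c1 - 1) / a\<^sup>2"
    and "\<tau> \<le> 0"
  shows "AE x0 in std_normal_vec. \<forall>k.
     \<bar>gd_iter (fnc i1 a) c1 c2 x0 k $ i1\<bar> < a \<longrightarrow>
       (let xk = gd_iter (fnc i1 a) c1 c2 x0 k;
            q = \<lceil>log 2 ((1 + \<tau>) * a / \<bar>xk $ i1\<bar>)\<rceil>
        in ls_terminates (fnc i1 a) c1 c2 xk (- grad (fnc i1 a) xk) \<and>
           gd_step (fnc i1 a) c1 c2 x0 k = min 1 (1 / 2 powr (real_of_int q - 1)))"
proof -
  have n1: "real CARD('n) - 1 \<ge> 1" using assms(1) by simp
  have s1: "sqrt (real CARD('n) - 1) \<ge> 1" using n1 by simp
  have a1: "a > 0" using assms(2) s1 by linarith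
  have "(sqrt (real CARD('n) - 1))\<^sup>2 \<le> a\<^sup>2"
    using assms(2) s1 by (intro power_mono) auto
  then have an: "a\<^sup>2 \<ge> real CARD('n) - 1" using n1 by simp
  show ?thesis
    using AE_good[of i1 a]
  proof (rule AE_mp, intro AE_I2 impI allI)
    fix x0 :: "real^'n" and k
    assume G: "\<forall>r\<in>\<rat>. x0 $ i1 \<noteq> a * r"
      and ua: "\<bar>gd_iter (fnc i1 a) c1 c2 x0 k $ i1\<bar> < a"
    define xk where "xk = gd_iter (fnc i1 a) c1 c2 x0 k"
    obtain r where r: "r \<in> \<rat>" "xk $ i1 = x0 $ i1 + a * r"
      using iter_rat[OF G, of c1 c2 k] by (auto simp: xk_def)
    have ne: "xk $ i1 \<noteq> 0"
    proof
      assume "xk $ i1 = 0"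
      then have "x0 $ i1 = a * (- r)" using r by simp
      moreover have "- r \<in> \<rat>" using r by simp
      ultimately show False using G by blast
    qed
    show "let xk = gd_iter (fnc i1 a) c1 c2 x0 k;
            q = \<lceil>log 2 ((1 + \<tau>) * a / \<bar>xk $ i1\<bar>)\<rceil>
        in ls_terminates (fnc i1 a) c1 c2 xk (- grad (fnc i1 a) xk) \<and>
           gd_step (fnc i1 a) c1 c2 x0 k = min 1 (1 / 2 powr (real_of_int q - 1))"
      using ls_main[OF ne ua[folded xk_def] a1 an assms(3,4,5,6,7)]
      by (simp add: xk_def[symmetric] gd_step_def Let_def)
  qed
qed

end
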